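(* Let $F_1,F_2$ be bijections of $\mathbb F_2^m$ with $F_1(0)=F_2(0)=0$ such that the self-embeddings $S\cup F_1(S)$ and $S\cup F_2(S)$ are isomorphic, where $S=STS(\mathcal H^n)$. Then $F_1$ and $F_2$ are CCZ-equivalent.
   Context: $n=2^m-1$; identify $\mathbb F_2^m$ with $GF(2^m)$. $S=STS(\mathcal H^n)$ is the set of 3-subsets $\{a,b,c\}$ of nonzero elements with $a+b+c=0$; $F(S)=\{\{F(a),F(b),F(c)\}:\{a,b,c\}\in S\}$. Self-embeddings $S\cup F_1(S)$, $S\cup F_2(S)$ are isomorphic if there is a permutation $\sigma$ of the nonzero elements with either $\sigma(S)=S,\sigma(F_1(S))=F_2(S)$ or $\sigma(S)=F_2(S),\sigma(F_1(S))=S$. $\mathcal C_F$ is the binary linear code of length $n$ with parity-check matrix whose columns are $\binom{x}{F(x)}$ for nonzero $x\in\mathbb F_2^m$; $\mathcal C_F^*$ is its extension by an overall parity-check bit. $F_1,F_2$ are called CCZ-equivalent if $\mathcal C^*_{F_1}$ and $\mathcal C^*_{F_2}$ are equivalent codes (one obtained from the other by a coordinate permutation). *)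

theory Defs
  imports "HOL-Analysis.Analysis" "HOL-Library.Z2"
begin

(* F_2^m is modelled as the type  bit ^ 'm  (m = CARD('m)); only its additive
   structure is used by the notions below. *)

definition nonzeros :: "(bit ^ 'm) set" where
  "nonzeros = UNIV - {0}"

definition STS :: "(bit ^ 'm) set set" where
  "STS = {{a, b, c} | a b c. a \<in> nonzeros \<and> b \<in> nonzeros \<and> c \<in> nonzeros
            \<and> a \<noteq> b \<and> a \<noteq> c \<and> b \<noteq> c \<and> a + b + c = 0}"

definition blocks_image :: "('a \<Rightarrow> 'b) \<Rightarrow> 'a set set \<Rightarrow> 'b set set" where
  "blocks_image F S = (\<lambda>T. F ` T) ` S"

definition selfemb_iso :: "(bit ^ 'm \<Rightarrow> bit ^ 'm) \<Rightarrow> (bit ^ 'm \<Rightarrow> bit ^ 'm) \<Rightarrow> bool" where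
  "selfemb_iso F1 F2 \<longleftrightarrow> (\<exists>\<sigma>. bij_betw \<sigma> nonzeros nonzeros \<and>
      ((blocks_image \<sigma> STS = STS \<and> blocks_image \<sigma> (blocks_image F1 STS) = blocks_image F2 STS)
     \<or> (blocks_image \<sigma> STS = blocks_image F2 STS \<and> blocks_image \<sigma> (blocks_image F1 STS) = STS)))"

(* The code C_F: words indexed by the nonzero vectors (represented as functions on
   bit ^ 'm that vanish at 0) lying in the kernel of the parity-check matrix whose
   columns are (x, F x), x nonzero. *)
definition code_F :: "(bit ^ 'm \<Rightarrow> bit ^ 'm) \<Rightarrow> (bit ^ 'm \<Rightarrow> bit) set" where
  "code_F F = {c. c 0 = 0 \<and>
      (\<Sum>x\<in>nonzeros. c x *s x) = 0 \<and> (\<Sum>x\<in>nonzeros. c x *s F x) = 0}"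

(* Extension by an overall parity-check bit, placed at the (otherwise unused)
   coordinate 0; the extended code has length n + 1 = 2^m. *)
definition extend_code :: "(bit ^ 'm \<Rightarrow> bit) set \<Rightarrow> (bit ^ 'm \<Rightarrow> bit) set" where
  "extend_code C = {c(0 := (\<Sum>x\<in>nonzeros. c x)) | c. c \<in> C}"

definition code_F_ext :: "(bit ^ 'm \<Rightarrow> bit ^ 'm) \<Rightarrow> (bit ^ 'm \<Rightarrow> bit) set" where
  "code_F_ext F = extend_code (code_F F)"

definition equiv_codes :: "('i \<Rightarrow> bit) set \<Rightarrow> ('i \<Rightarrow> bit) set \<Rightarrow> bool" where
  "equiv_codes C1 C2 \<longleftrightarrow> (\<exists>\<pi>. bij \<pi> \<and> C2 = (\<lambda>c. c \<circ> \<pi>) ` C1)"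

definition CCZ_equivalent :: "(bit ^ 'm \<Rightarrow> bit ^ 'm) \<Rightarrow> (bit ^ 'm \<Rightarrow> bit ^ 'm) \<Rightarrow> bool" where
  "CCZ_equivalent F1 F2 \<longleftrightarrow> equiv_codes (code_F_ext F1) (code_F_ext F2)"

end

theory Submission
  imports Defs
begin

instance bit :: finite
proof
  have e: "(UNIV::bit set) = {0,1}" by (auto intro: bit.exhaust)
  show "finite (UNIV::bit set)" by (subst e) simp
qed

lemma bit_add_self[simp]: "(b::bit) + b = 0"
  by (cases b) auto

lemma vec_add_self[simp]: "(v::bit^'m) + v = 0"
  by (simp add: vec_eq_iff)

lemma vec_add_eq0: "(u::bit^'m) + v = 0 \<longleftrightarrow> u = v"
  by (metis add.assoc add_0_left vec_add_self add_0_right)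

lemma bit_add_eq0: "(u::bit) + v = 0 \<longleftrightarrow> u = v"
  by (metis add.assoc add_0_left bit_add_self add_0_right)

lemma bit_cases_s: "(c::bit) *s v = (if c = 0 then 0 else v)"
  by (cases c) auto

lemma sum_split0: "sum h (UNIV::(bit^'m) set) = h 0 + sum h nonzeros"
  unfolding nonzeros_def by (simp add: sum.remove[of UNIV 0])

lemma ext_char:
  fixes F :: "bit^'m \<Rightarrow> bit^'m"
  assumes F0: "F 0 = 0"
  shows "code_F_ext F = {e. sum e UNIV = 0 \<and> (\<Sum>x\<in>UNIV. e x *s x) = 0 \<and> (\<Sum>x\<in>UNIV. e x *s F x) = 0}"
proof (intro set_eqI iffI)
  fix e assume "e \<in> code_F_ext F"
  then obtain c where c: "c \<in> code_F F" and e: "e = c(0 := (\<Sum>x\<in>nonzeros. c x))"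
    unfolding code_F_ext_def extend_code_def by auto
  have nz: "\<And>x. x\<in>nonzeros \<Longrightarrow> e x = c x" using e by (auto simp: nonzeros_def)
  have s1: "sum e nonzeros = sum c nonzeros" by (rule sum.cong) (simp_all add: nz)
  have s2: "(\<Sum>x\<in>nonzeros. e x *s x) = (\<Sum>x\<in>nonzeros. c x *s x)" by (rule sum.cong) (simp_all add: nz)
  have s3: "(\<Sum>x\<in>nonzeros. e x *s F x) = (\<Sum>x\<in>nonzeros. c x *s F x)" by (rule sum.cong) (simp_all add: nz)
  have e0: "e 0 = sum c nonzeros" using e by simp
  show "e \<in> {e. sum e UNIV = 0 \<and> (\<Sum>x\<in>UNIV. e x *s x) = 0 \<and> (\<Sum>x\<in>UNIV. e x *s F x) = 0}"
    using c s1 s2 s3 e0 F0 unfolding code_F_def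
    by (simp add: sum_split0[of e] sum_split0[of "\<lambda>x. e x *s x"] sum_split0[of "\<lambda>x. e x *s F x"])
next
  fix e assume "e \<in> {e. sum e UNIV = 0 \<and> (\<Sum>x\<in>UNIV. e x *s x) = 0 \<and> (\<Sum>x\<in>UNIV. e x *s F x) = 0}"
  then have h1: "e 0 + sum e nonzeros = 0" and h2: "(\<Sum>x\<in>nonzeros. e x *s x) = 0"
     and h3: "(\<Sum>x\<in>nonzeros. e x *s F x) = 0"
    using F0 by (simp_all add: sum_split0[of e] sum_split0[of "\<lambda>x. e x *s x"] sum_split0[of "\<lambda>x. e x *s F x"])
  define c where "c = e(0:=0)"
  have nz: "\<And>x. x\<in>nonzeros \<Longrightarrow> c x = e x" using c_def by (auto simp: nonzeros_def)
  have s1: "sum c nonzeros = sum e nonzeros" by (rule sum.cong) (simp_all add: nz)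
  have s2: "(\<Sum>x\<in>nonzeros. c x *s x) = (\<Sum>x\<in>nonzeros. e x *s x)" by (rule sum.cong) (simp_all add: nz)
  have s3: "(\<Sum>x\<in>nonzeros. c x *s F x) = (\<Sum>x\<in>nonzeros. e x *s F x)" by (rule sum.cong) (simp_all add: nz)
  have cc: "c \<in> code_F F" unfolding code_F_def using s2 s3 h2 h3 c_def by simp
  have "e 0 = sum e nonzeros" using h1 bit_add_eq0 by blast
  then have "e = c(0 := (\<Sum>x\<in>nonzeros. c x))" using s1 c_def by (auto simp: fun_eq_iff)
  then show "e \<in> code_F_ext F" unfolding code_F_ext_def extend_code_def using cc by blast
qed

lemma transfer:
  fixes F1 F2 \<phi> :: "bit^'m \<Rightarrow> bit^'m"
  assumes F10: "F1 0 = 0" and F20: "F2 0 = 0" and b: "bij \<phi>"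
   and key: "\<And>c::bit^'m \<Rightarrow> bit. ((\<Sum>x\<in>UNIV. c x *s \<phi> x) = 0 \<and> (\<Sum>x\<in>UNIV. c x *s F2 (\<phi> x)) = 0)
        \<longleftrightarrow> ((\<Sum>x\<in>UNIV. c x *s x) = 0 \<and> (\<Sum>x\<in>UNIV. c x *s F1 x) = 0)"
  shows "CCZ_equivalent F1 F2"
proof -
  have ri: "\<And>k::bit^'m \<Rightarrow> 'b::comm_monoid_add. sum (\<lambda>x. k (\<phi> x)) UNIV = sum k UNIV"
    using b by (simp add: bij_betw_def sum.reindex_bij_betw)
  have mem: "d \<in> code_F_ext F2 \<longleftrightarrow> d \<circ> \<phi> \<in> code_F_ext F1" for d
  proof -
    have "sum d UNIV = sum (d \<circ> \<phi>) UNIV" using ri[of d] by (simp add: o_def)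
    moreover have "(\<Sum>x\<in>UNIV. d x *s x) = (\<Sum>x\<in>UNIV. (d \<circ> \<phi>) x *s \<phi> x)"
      using ri[of "\<lambda>x. d x *s x"] by (simp add: o_def)
    moreover have "(\<Sum>x\<in>UNIV. d x *s F2 x) = (\<Sum>x\<in>UNIV. (d \<circ> \<phi>) x *s F2 (\<phi> x))"
      using ri[of "\<lambda>x. d x *s F2 x"] by (simp add: o_def)
    ultimately show ?thesis using key[of "d \<circ> \<phi>"] F10 F20 by (simp add: ext_char)
  qed
  have i1: "\<And>x. inv \<phi> (\<phi> x) = x" using b by (simp add: bij_is_inj)
  have i2: "\<And>x. \<phi> (inv \<phi> x) = x" using b by (simp add: bij_is_surj surj_f_inv_f)
  have "code_F_ext F2 = (\<lambda>c. c \<circ> inv \<phi>) ` code_F_ext F1"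
  proof (intro set_eqI iffI)
    fix d assume "d \<in> code_F_ext F2"
    then have "d \<circ> \<phi> \<in> code_F_ext F1" using mem by blast
    moreover have "d = (d \<circ> \<phi>) \<circ> inv \<phi>" using i2 by (simp add: fun_eq_iff)
    ultimately show "d \<in> (\<lambda>c. c \<circ> inv \<phi>) ` code_F_ext F1" by blast
  next
    fix d assume "d \<in> (\<lambda>c. c \<circ> inv \<phi>) ` code_F_ext F1"
    then obtain c where c: "c \<in> code_F_ext F1" "d = c \<circ> inv \<phi>" by blast
    have "d \<circ> \<phi> = c" using c(2) i1 by (simp add: fun_eq_iff)
    then show "d \<in> code_F_ext F2" using mem c(1) by simp
  qed
  moreover have "bij (inv \<phi>)" using b by (simp add: bij_imp_bij_inv)
  ultimately show ?thesis unfolding CCZ_equivalent_def equiv_codes_def by blast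
qed

lemma card3_distinct: "card {x,y,z} = 3 \<Longrightarrow> x \<noteq> y \<and> x \<noteq> z \<and> y \<noteq> z"
  by (auto simp: card_insert_if split: if_splits)

lemma sts_triple:
  fixes g :: "bit^'m \<Rightarrow> bit^'m"
  assumes gs: "blocks_image g STS \<subseteq> STS"
    and a: "a \<in> nonzeros" and bb: "b \<in> nonzeros" and ab: "a \<noteq> b"
  shows "g (a + b) = g a + g b"
proof -
  have ab0: "a + b \<noteq> 0" using ab vec_add_eq0 by blast
  have "a \<noteq> a + b" using bb unfolding nonzeros_def
    by (metis DiffE add.right_neutral add_left_cancel singletonI)
  moreover have "b \<noteq> a + b" using a unfolding nonzeros_def
    by (metis DiffE add_0_left add_right_cancel singletonI)
  moreover have "a + b + (a + b) = 0" by simp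
  ultimately have "{a, b, a + b} \<in> STS" using a bb ab ab0 unfolding STS_def nonzeros_def by blast
  then have "g ` {a, b, a + b} \<in> STS" using gs unfolding blocks_image_def by blast
  then have "{g a, g b, g (a + b)} \<in> STS" by simp
  then obtain p q r where pqr: "{g a, g b, g (a + b)} = {p, q, r}" "p \<noteq> q" "p \<noteq> r" "q \<noteq> r"
     "p + q + r = 0" unfolding STS_def by blast
  have "card {p,q,r} = 3" using pqr by simp
  then have d: "g a \<noteq> g b \<and> g a \<noteq> g (a + b) \<and> g b \<noteq> g (a + b)"
    using card3_distinct pqr(1) by metis
  have "sum id {g a, g b, g (a + b)} = g a + g b + g (a + b)" using d by (simp add: add.assoc)
  moreover have "sum id {p, q, r} = p + q + r" using pqr by (simp add: add.assoc)
  ultimately have "g a + g b + g (a + b) = 0" using pqr by simp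
  then show ?thesis using vec_add_eq0 by metis
qed

lemma sts_additive:
  fixes g :: "bit^'m \<Rightarrow> bit^'m"
  assumes gs: "blocks_image g STS \<subseteq> STS"
  shows "(g(0:=0)) (u + v) = (g(0:=0)) u + (g(0:=0)) v"
proof (cases "u = 0 \<or> v = 0 \<or> u = v")
  case True then show ?thesis by auto
next
  case False
  then have "u \<in> nonzeros" "v \<in> nonzeros" "u + v \<noteq> 0" using vec_add_eq0 by (auto simp: nonzeros_def)
  moreover have "g (u + v) = g u + g v" using sts_triple[OF gs, of u v] False \<open>u \<in> nonzeros\<close> \<open>v \<in> nonzeros\<close> by blast
  ultimately show ?thesis using False by simp
qed

lemma zero_iff:
  fixes g :: "bit^'m \<Rightarrow> bit^'m"
  assumes gn: "g ` nonzeros \<subseteq> nonzeros"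
  shows "(g(0:=0)) w = 0 \<longleftrightarrow> w = 0"
  using gn by (auto simp: nonzeros_def)

lemma lin_inj:
  fixes g :: "bit^'m \<Rightarrow> bit^'m"
  assumes gn: "g ` nonzeros \<subseteq> nonzeros" and gs: "blocks_image g STS \<subseteq> STS"
  shows "inj (g(0:=0))"
proof (rule injI)
  fix u v assume "(g(0:=0)) u = (g(0:=0)) v"
  then have "(g(0:=0)) (u + v) = 0" using sts_additive[OF gs] by simp
  then have "u + v = 0" using zero_iff[OF gn] by blast
  then show "u = v" using vec_add_eq0 by blast
qed

lemma lin_sum:
  fixes g :: "bit^'m \<Rightarrow> bit^'m"
  assumes gs: "blocks_image g STS \<subseteq> STS"
  shows "(g(0:=0)) (\<Sum>x\<in>A. c x *s h x) = (\<Sum>x\<in>A. c x *s (g(0:=0)) (h x))"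
proof -
  have "(\<Sum>x\<in>A. c x *s (g(0:=0)) (h x)) = sum ((g(0:=0)) \<circ> (\<lambda>x. c x *s h x)) A"
    by (rule sum.cong) (simp_all add: bit_cases_s)
  also have "\<dots> = (g(0:=0)) (\<Sum>x\<in>A. c x *s h x)"
    by (rule sum_comp_morphism) (simp, rule sts_additive[OF gs])
  finally show ?thesis by simp
qed

lemma bi_comp: "blocks_image f (blocks_image g S) = blocks_image (f \<circ> g) S"
  by (simp add: blocks_image_def image_comp image_image)

lemma bi_inv: "inj F \<Longrightarrow> blocks_image (inv F) (blocks_image F S) = S"
  unfolding bi_comp by (simp add: blocks_image_def)

lemma nz_bij: "bij (F::bit^'m \<Rightarrow> bit^'m) \<Longrightarrow> F 0 = 0 \<Longrightarrow> F ` nonzeros \<subseteq> nonzeros"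
  by (auto simp: nonzeros_def bij_def) (metis injD)

lemma nz_inv: "bij (F::bit^'m \<Rightarrow> bit^'m) \<Longrightarrow> F 0 = 0 \<Longrightarrow> inv F ` nonzeros \<subseteq> nonzeros"
  by (auto simp: nonzeros_def bij_def) (metis surj_f_inv_f)

lemma inj_bij_fin: "inj (f::bit^'m \<Rightarrow> bit^'m) \<Longrightarrow> bij f"
  by (simp add: bij_def finite_UNIV_inj_surj)

theorem mainTheorem12:
  fixes F1 F2 :: "bit ^ 'm \<Rightarrow> bit ^ 'm"
  assumes "bij F1" and "bij F2" and "F1 0 = 0" and "F2 0 = 0"
    and "selfemb_iso F1 F2"
  shows "CCZ_equivalent F1 F2"
proof -
  note b1 = assms(1) and b2 = assms(2) and z1 = assms(3) and z2 = assms(4)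
  obtain \<sigma> where sb: "bij_betw \<sigma> nonzeros nonzeros" and
     cs: "(blocks_image \<sigma> STS = STS \<and> blocks_image \<sigma> (blocks_image F1 STS) = blocks_image F2 STS)
     \<or> (blocks_image \<sigma> STS = blocks_image F2 STS \<and> blocks_image \<sigma> (blocks_image F1 STS) = STS)"
    using assms(5) unfolding selfemb_iso_def by blast
  have sn: "\<sigma> ` nonzeros \<subseteq> nonzeros" using sb by (simp add: bij_betw_def)
  have n1: "F1 ` nonzeros \<subseteq> nonzeros" using nz_bij b1 z1 .
  have n2: "inv F2 ` nonzeros \<subseteq> nonzeros" using nz_inv b2 z2 .
  have i2: "inj F2" using b2 bij_is_inj by blast
  have F2inv: "\<And>y. F2 (inv F2 y) = y" using b2 by (simp add: bij_is_surj surj_f_inv_f)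
  have F1nz: "\<And>x. x \<noteq> 0 \<Longrightarrow> F1 x \<noteq> 0" using n1 by (auto simp: nonzeros_def)
  from cs show ?thesis
  proof
    assume c1: "blocks_image \<sigma> STS = STS \<and> blocks_image \<sigma> (blocks_image F1 STS) = blocks_image F2 STS"
    define \<tau> where "\<tau> = inv F2 \<circ> \<sigma> \<circ> F1"
    have tn: "\<tau> ` nonzeros \<subseteq> nonzeros" using n1 sn n2 unfolding \<tau>_def by (auto simp: image_subset_iff)
    have ts: "blocks_image \<tau> STS \<subseteq> STS"
    proof -
      have "blocks_image \<tau> STS = blocks_image (inv F2) (blocks_image \<sigma> (blocks_image F1 STS))"
        unfolding \<tau>_def by (simp add: bi_comp comp_assoc)
      also have "\<dots> = STS" using c1 bi_inv[OF i2] by simp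
      finally show ?thesis by simp
    qed
    have ss: "blocks_image \<sigma> STS \<subseteq> STS" using c1 by simp
    define \<phi> where "\<phi> = \<tau>(0:=0)"
    define s' where "s' = \<sigma>(0:=0)"
    have rel: "F2 (\<phi> x) = s' (F1 x)" for x
      using z1 z2 F1nz F2inv unfolding \<phi>_def s'_def \<tau>_def by auto
    have bphi: "bij \<phi>" unfolding \<phi>_def using lin_inj[OF tn ts] inj_bij_fin by blast
    show ?thesis
    proof (rule transfer[of F1 F2 \<phi>, OF z1 z2 bphi])
      fix c :: "bit^'m \<Rightarrow> bit"
      have zp: "\<And>w. \<phi> w = 0 \<longleftrightarrow> w = 0" unfolding \<phi>_def by (rule zero_iff[OF tn])
      have zs: "\<And>w. s' w = 0 \<longleftrightarrow> w = 0" unfolding s'_def by (rule zero_iff[OF sn])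
      have e1: "(\<Sum>x\<in>UNIV. c x *s \<phi> x) = \<phi> (\<Sum>x\<in>UNIV. c x *s x)"
        unfolding \<phi>_def using lin_sum[OF ts, of c "\<lambda>x. x" UNIV] by simp
      have e2: "(\<Sum>x\<in>UNIV. c x *s F2 (\<phi> x)) = s' (\<Sum>x\<in>UNIV. c x *s F1 x)"
        unfolding rel s'_def using lin_sum[OF ss, of c F1 UNIV] by simp
      show "((\<Sum>x\<in>UNIV. c x *s \<phi> x) = 0 \<and> (\<Sum>x\<in>UNIV. c x *s F2 (\<phi> x)) = 0)
        \<longleftrightarrow> ((\<Sum>x\<in>UNIV. c x *s x) = 0 \<and> (\<Sum>x\<in>UNIV. c x *s F1 x) = 0)"
        unfolding e1 e2 zp zs by (rule refl)
    qed
  next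
    assume c2: "blocks_image \<sigma> STS = blocks_image F2 STS \<and> blocks_image \<sigma> (blocks_image F1 STS) = STS"
    define \<rho> where "\<rho> = inv F2 \<circ> \<sigma>"
    define \<mu> where "\<mu> = \<sigma> \<circ> F1"
    have rn: "\<rho> ` nonzeros \<subseteq> nonzeros" using sn n2 unfolding \<rho>_def by (auto simp: image_subset_iff)
    have mn: "\<mu> ` nonzeros \<subseteq> nonzeros" using n1 sn unfolding \<mu>_def by (auto simp: image_subset_iff)
    have rs: "blocks_image \<rho> STS \<subseteq> STS"
    proof -
      have "blocks_image \<rho> STS = blocks_image (inv F2) (blocks_image \<sigma> STS)"
        unfolding \<rho>_def by (simp add: bi_comp)
      also have "\<dots> = STS" using c2 bi_inv[OF i2] by simp
      finally show ?thesis by simp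
    qed
    have ms: "blocks_image \<mu> STS \<subseteq> STS" using c2 unfolding \<mu>_def by (simp add: bi_comp)
    define r' where "r' = \<rho>(0:=0)"
    define m' where "m' = \<mu>(0:=0)"
    define \<phi> where "\<phi> = r' \<circ> F1"
    have rel: "F2 (\<phi> x) = m' x" for x
      using z1 z2 F1nz F2inv unfolding \<phi>_def r'_def m'_def \<rho>_def \<mu>_def by auto
    have "inj \<phi>" unfolding \<phi>_def r'_def using lin_inj[OF rn rs] b1 bij_is_inj inj_compose by blast
    then have bphi: "bij \<phi>" using inj_bij_fin by blast
    show ?thesis
    proof (rule transfer[of F1 F2 \<phi>, OF z1 z2 bphi])
      fix c :: "bit^'m \<Rightarrow> bit"
      have zr: "\<And>w. r' w = 0 \<longleftrightarrow> w = 0" unfolding r'_def by (rule zero_iff[OF rn])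
      have zm: "\<And>w. m' w = 0 \<longleftrightarrow> w = 0" unfolding m'_def by (rule zero_iff[OF mn])
      have e1: "(\<Sum>x\<in>UNIV. c x *s \<phi> x) = r' (\<Sum>x\<in>UNIV. c x *s F1 x)"
        unfolding \<phi>_def r'_def using lin_sum[OF rs, of c F1 UNIV] by simp
      have e2: "(\<Sum>x\<in>UNIV. c x *s F2 (\<phi> x)) = m' (\<Sum>x\<in>UNIV. c x *s x)"
        unfolding rel m'_def using lin_sum[OF ms, of c "\<lambda>x. x" UNIV] by simp
      show "((\<Sum>x\<in>UNIV. c x *s \<phi> x) = 0 \<and> (\<Sum>x\<in>UNIV. c x *s F2 (\<phi> x)) = 0)
        \<longleftrightarrow> ((\<Sum>x\<in>UNIV. c x *s x) = 0 \<and> (\<Sum>x\<in>UNIV. c x *s F1 x) = 0)"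
        unfolding e1 e2 zr zm by blast
    qed
  qed
qed

end
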